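(* Let $G$, $\rho$, $H$, $\{U_i\}_{i\in I}$, $\sigma$, $C$ be as in the context, and let $I_k\subseteq I$ be an orbit of $\sigma$, with a fixed element $0\in I_k$. Suppose we are given a tight compatible encoding scheme for $I_k$ on $C$, i.e. open subsets $\{D^k_i\}_{i\in I_k}$ of $C$ which are pairwise disjoint and cover $C$ up to a set of $\mu_C$-measure zero, such that $h\cdot D^k_i = D^k_{\sigma(i,h^{-1})}$ for all $h\in H$, $i\in I_k$, and set $E^k_i:=D^k_i$ for all $i\in I_k$. For $i\in I_k$ choose $c_i\in H$ with $c_i\cdot E^k_0=E^k_i$. For $x\in C$ lying in $D^k_j$ write $U(x):=U_j$ (defined for $\mu_C$-almost every $x$). For $i\in I_k$ define the channel $$\mathcal T^k_i(\tau):=\frac{1}{\mu_C(E^k_i)}\int_{G\times C} dg\,dx\;\mathbb 1_{E^k_i}(x)\,\big[\rho(g)^\dagger U(g\cdot x)\rho(g)\,U_i^\dagger\big](\tau)$$ on density matrices $\tau$ on $V$ (this is the effective channel, in Alice's frame, of the tight teleportation procedure when Alice obtains measurement result $i$ and sends a uniformly random reading $x\in E^k_i$, Bob receives $g\cdot x$ and applies $U(g\cdot x)$, with $g$ Haar-distributed). Then $$\mathcal T^k_i=\frac{|I_k|}{\mu_C(E^k_0)}\,[\rho(c_i)]\circ\left(\int_G dg\;p(g)\,\big[\rho(g)^\dagger U_0\rho(g)U_0^\dagger\big]\right)\circ[\rho(c_i)^\dagger],$$ where $p(g):=\int_{C}dx\,\mathbb 1_{E^k_0}(x)\,\mathbb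 1_{D^k_0}(g\cdot x)=\mu_C\big(E^k_0\cap g^{-1}\cdot D^k_0\big)$.
   Context: $G$ is a compact Lie group with normalised Haar measure $dg$, and $\rho:G\to U(V)$ is a unitary representation on a Hilbert space $V\cong\mathbb C^d$. For an operator $M$ on $V$, $[M]$ denotes the map $\tau\mapsto M\tau M^\dagger$, and $\circ$ is composition of maps. A unitary error basis (UEB) is a family $\{U_i\}_{i\in I}$, $|I|=d^2$, of unitaries on $V$ with $\frac1d\mathrm{Tr}(U_i^\dagger U_j)=\delta_{ij}$. $H\subseteq G$ is a finite subgroup and $\{U_i\}_{i\in I}$ is $H$-equivariant: there is a right action $\sigma:I\times H\to I$ and phases $\alpha(i,h)\in U(1)$ with $\rho(h)^\dagger U_i\rho(h)=\alpha(i,h)U_{\sigma(i,h)}$ for all $h\in H$, $i\in I$. $C$ is a smooth manifold with a normalised measure $\mu_C$ (written $dx$) carrying a smooth, measure-preserving left action $G\times C\to C$, $(g,x)\mapsto g\cdot x$. $\mathbb 1_S$ denotes the indicator function of a set $S$. *)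

theory Defs
  imports "HOL-Analysis.Analysis" "HOL-Probability.Probability"
begin

text \<open>Operators on V = complex^'n (d = CARD('n)) are matrices complex^'n^'n.\<close>

definition cadj :: "complex^'n^'n \<Rightarrow> complex^'n^'n" where
  "cadj A = (\<chi> i j. cnj (A $ j $ i))"

definition cscale :: "complex \<Rightarrow> complex^'n^'n \<Rightarrow> complex^'n^'n" where
  "cscale c A = (\<chi> i j. c * A $ i $ j)"

definition unitary_mat :: "complex^'n^'n \<Rightarrow> bool" where
  "unitary_mat A \<longleftrightarrow> cadj A ** A = mat 1 \<and> A ** cadj A = mat 1"

definition conj_map :: "complex^'n^'n \<Rightarrow> complex^'n^'n \<Rightarrow> complex^'n^'n" where
  "conj_map M \<tau> = M ** \<tau> ** cadj M"

text \<open>Compact (Hausdorff, second countable) topological group with multiplication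
  gmul, unit gone, inverse ginv, and MG its normalised Haar measure (Borel probability
  measure, left and right invariant; for compact groups the Haar measure is bi-invariant).\<close>
definition compact_group_haar ::
  "('g::{t2_space,second_countable_topology} \<Rightarrow> 'g \<Rightarrow> 'g) \<Rightarrow> 'g \<Rightarrow> ('g \<Rightarrow> 'g) \<Rightarrow> 'g measure \<Rightarrow> bool" where
  "compact_group_haar gmul gone ginv MG \<longleftrightarrow>
     group gmul gone ginv \<and>
     compact (UNIV :: 'g set) \<and>
     continuous_on UNIV (\<lambda>(a,b). gmul a b) \<and> continuous_on UNIV ginv \<and>
     prob_space MG \<and> sets MG = sets borel \<and>
     (\<forall>g. (\<lambda>h. gmul g h) \<in> measurable MG MG \<and> distr MG MG (\<lambda>h. gmul g h) = MG) \<and>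
     (\<forall>g. (\<lambda>h. gmul h g) \<in> measurable MG MG \<and> distr MG MG (\<lambda>h. gmul h g) = MG)"

definition unitary_rep ::
  "('g::topological_space \<Rightarrow> 'g \<Rightarrow> 'g) \<Rightarrow> ('g \<Rightarrow> complex^'n^'n) \<Rightarrow> bool" where
  "unitary_rep gmul \<rho> \<longleftrightarrow>
     (\<forall>g. unitary_mat (\<rho> g)) \<and> (\<forall>g h. \<rho> (gmul g h) = \<rho> g ** \<rho> h) \<and>
     continuous_on UNIV \<rho>"

text \<open>Unitary error basis indexed by the finite type 'i (I = UNIV).\<close>
definition UEB :: "('i::finite \<Rightarrow> complex^'n^'n) \<Rightarrow> bool" where
  "UEB U \<longleftrightarrow> CARD('i) = CARD('n)^2 \<and> (\<forall>i. unitary_mat (U i)) \<and>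
     (\<forall>i j. trace (cadj (U i) ** U j) / of_nat CARD('n) = (if i = j then 1 else 0))"

definition finite_subgroup :: "('g \<Rightarrow> 'g \<Rightarrow> 'g) \<Rightarrow> 'g \<Rightarrow> ('g \<Rightarrow> 'g) \<Rightarrow> 'g set \<Rightarrow> bool" where
  "finite_subgroup gmul gone ginv H \<longleftrightarrow> finite H \<and> gone \<in> H \<and>
     (\<forall>a\<in>H. \<forall>b\<in>H. gmul a b \<in> H) \<and> (\<forall>a\<in>H. ginv a \<in> H)"

definition H_equivariant ::
  "('g \<Rightarrow> 'g \<Rightarrow> 'g) \<Rightarrow> 'g \<Rightarrow> ('g \<Rightarrow> complex^'n^'n) \<Rightarrow> 'g set \<Rightarrow>
   ('i \<Rightarrow> complex^'n^'n) \<Rightarrow> ('i \<Rightarrow> 'g \<Rightarrow> 'i) \<Rightarrow> ('i \<Rightarrow> 'g \<Rightarrow> complex) \<Rightarrow> bool" where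
  "H_equivariant gmul gone \<rho> H U \<sigma> \<alpha> \<longleftrightarrow>
     (\<forall>i. \<sigma> i gone = i) \<and>
     (\<forall>i. \<forall>h\<in>H. \<forall>h'\<in>H. \<sigma> (\<sigma> i h) h' = \<sigma> i (gmul h h')) \<and>
     (\<forall>i. \<forall>h\<in>H. cmod (\<alpha> i h) = 1) \<and>
     (\<forall>i. \<forall>h\<in>H. cadj (\<rho> h) ** U i ** \<rho> h = cscale (\<alpha> i h) (U (\<sigma> i h)))"

definition mp_left_action ::
  "('g::topological_space \<Rightarrow> 'g \<Rightarrow> 'g) \<Rightarrow> 'g \<Rightarrow> ('g \<Rightarrow> 'c::topological_space \<Rightarrow> 'c) \<Rightarrow> 'c measure \<Rightarrow> bool" where
  "mp_left_action gmul gone act MC \<longleftrightarrow>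
     prob_space MC \<and> sets MC = sets borel \<and>
     (\<forall>x. act gone x = x) \<and> (\<forall>g h x. act (gmul g h) x = act g (act h x)) \<and>
     continuous_on UNIV (\<lambda>(g,x). act g x) \<and>
     (\<forall>g. act g \<in> measurable MC MC \<and> distr MC MC (act g) = MC)"

definition tight_compatible_encoding ::
  "('g \<Rightarrow> 'g) \<Rightarrow> ('g \<Rightarrow> 'c::topological_space \<Rightarrow> 'c) \<Rightarrow> 'c measure \<Rightarrow> 'g set \<Rightarrow>
   ('i \<Rightarrow> 'g \<Rightarrow> 'i) \<Rightarrow> 'i set \<Rightarrow> ('i \<Rightarrow> 'c set) \<Rightarrow> bool" where
  "tight_compatible_encoding ginv act MC H \<sigma> Ik D \<longleftrightarrow>
     (\<forall>i\<in>Ik. open (D i)) \<and> disjoint_family_on D Ik \<and>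
     (UNIV - (\<Union>i\<in>Ik. D i)) \<in> null_sets MC \<and>
     (\<forall>h\<in>H. \<forall>i\<in>Ik. act h ` D i = D (\<sigma> i (ginv h)))"

text \<open>U(x) := U_j for x in D_j (j in Ik); off the union of the D_j (a null set) it is 0.\<close>
definition Ufun :: "('i \<Rightarrow> complex^'n^'n) \<Rightarrow> 'i set \<Rightarrow> ('i \<Rightarrow> 'c set) \<Rightarrow> 'c \<Rightarrow> complex^'n^'n" where
  "Ufun U Ik D x = (\<Sum>j\<in>Ik. indicator (D j) x *\<^sub>R U j)"

end

theory Submission imports Defs begin

lemma cadj_mult: "cadj (A ** B) = cadj B ** cadj (A::complex^'n^'n)"
  by (simp add: cadj_def matrix_matrix_mult_def vec_eq_iff mult.commute)

lemma cadj_cadj[simp]: "cadj (cadj A) = A"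
  by (simp add: cadj_def vec_eq_iff)

lemma cadj_cscale: "cadj (cscale a A) = cscale (cnj a) (cadj A)"
  by (simp add: cadj_def cscale_def vec_eq_iff)

lemma cscale_mult_left: "cscale a A ** B = cscale a (A ** (B::complex^'n^'n))"
  by (simp add: cscale_def matrix_matrix_mult_def vec_eq_iff sum_distrib_left mult.assoc)

lemma cscale_mult_right: "A ** cscale a B = cscale a (A ** (B::complex^'n^'n))"
  by (simp add: cscale_def matrix_matrix_mult_def vec_eq_iff sum_distrib_left mult_ac)

lemma cscale_cscale: "cscale a (cscale b A) = cscale (a*b) A"
  by (simp add: cscale_def vec_eq_iff mult.assoc)

lemma cscale_one[simp]: "cscale 1 A = A"
  by (simp add: cscale_def vec_eq_iff)

lemma conj_map_cscale: "cmod a = 1 \<Longrightarrow> conj_map (cscale a A) \<tau> = conj_map A (\<tau>::complex^'n^'n)"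
proof -
  assume a: "cmod a = 1"
  have "cnj a * a = 1" using a by (metis complex_norm_square mult.commute of_real_1 power_one)
  then show ?thesis
    by (simp add: conj_map_def cadj_cscale cscale_mult_left cscale_mult_right cscale_cscale)
qed

lemma matrix_add_rdistrib': "((B + C) ** A) = (B ** A) + (C ** (A::complex^'n^'n))"
  by (vector matrix_matrix_mult_def sum.distrib[symmetric] field_simps)

lemma conj_map_comp: "conj_map A (conj_map B \<tau>) = conj_map (A ** B) (\<tau>::complex^'n^'n)"
  by (simp add: conj_map_def cadj_mult matrix_mul_assoc)

lemma conj_map_zero[simp]: "conj_map 0 (\<tau>::complex^'n^'n) = 0"
  by (simp add: conj_map_def)

lemma mm_scaleR_right: "A ** (r *\<^sub>R B) = r *\<^sub>R (A ** (B::complex^'n^'n))"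
  by (simp add: matrix_matrix_mult_def vec_eq_iff scaleR_sum_right)

lemma mm_scaleR_left: "(r *\<^sub>R A) ** B = r *\<^sub>R (A ** (B::complex^'n^'n))"
  by (simp add: matrix_matrix_mult_def vec_eq_iff scaleR_sum_right)

lemma linear_conj_map: "linear (conj_map (M::complex^'n^'n))"
  by (rule linearI) (simp_all add: conj_map_def matrix_add_ldistrib matrix_add_rdistrib'
      mm_scaleR_right mm_scaleR_left)

lemma bounded_linear_conj_map: "bounded_linear (conj_map (M::complex^'n^'n))"
  using linear_conj_map linear_conv_bounded_linear by blast

lemma linear_cadj: "linear (cadj :: complex^'n^'n \<Rightarrow> _)"
  by (rule linearI) (simp_all add: cadj_def vec_eq_iff)

lemma bilinear_mm: "bilinear (\<lambda>A B::complex^'n^'n. A ** B)"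
  unfolding bilinear_def
  by (auto intro!: linearI simp: matrix_add_ldistrib matrix_add_rdistrib'
      mm_scaleR_right mm_scaleR_left)

lemma continuous_on_mm:
  "continuous_on S f \<Longrightarrow> continuous_on S g \<Longrightarrow> continuous_on S (\<lambda>x. f x ** (g x::complex^'n^'n))"
  by (rule bounded_bilinear.continuous_on[OF bilinear_mm[unfolded bilinear_conv_bounded_bilinear]])

lemma continuous_on_cadj:
  "continuous_on S f \<Longrightarrow> continuous_on S (\<lambda>x. cadj (f x::complex^'n^'n))"
  by (rule bounded_linear.continuous_on[OF linear_cadj[unfolded linear_conv_bounded_linear]])

lemma continuous_on_conj_map:
  "continuous_on S f \<Longrightarrow> continuous_on S (\<lambda>x. conj_map (f x) (\<tau>::complex^'n^'n))"
  unfolding conj_map_def by (intro continuous_on_mm continuous_on_cadj continuous_on_const)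


lemma rep_one:
  assumes g: "group gmul gone ginv" and r: "unitary_rep gmul \<rho>"
  shows "\<rho> gone = mat 1"
proof -
  interpret group gmul gone ginv by fact
  have u: "cadj (\<rho> gone) ** \<rho> gone = mat 1" using r by (simp add: unitary_rep_def unitary_mat_def)
  have "\<rho> gone = \<rho> gone ** \<rho> gone" using r unfolding unitary_rep_def by (metis left_neutral)
  then have "cadj (\<rho> gone) ** \<rho> gone = cadj (\<rho> gone) ** (\<rho> gone ** \<rho> gone)" by simp
  then show ?thesis by (simp add: matrix_mul_assoc u)
qed

lemma rep_inv:
  assumes g: "group gmul gone ginv" and r: "unitary_rep gmul \<rho>"
  shows "cadj (\<rho> x) = \<rho> (ginv x)"
proof -
  interpret group gmul gone ginv by fact
  have u: "cadj (\<rho> x) ** \<rho> x = mat 1" using r by (simp add: unitary_rep_def unitary_mat_def)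
  have "\<rho> (ginv x) = cadj (\<rho> x) ** \<rho> x ** \<rho> (ginv x)" by (simp add: u)
  also have "\<dots> = cadj (\<rho> x) ** \<rho> (gmul x (ginv x))"
    using r unfolding unitary_rep_def by (metis matrix_mul_assoc)
  also have "\<dots> = cadj (\<rho> x)" using rep_one[OF g r] by simp
  finally show ?thesis by simp
qed

lemma Ufun_decomp:
  fixes Q :: "complex^'n^'n \<Rightarrow> 'b::real_vector"
  assumes dj: "disjoint_family_on D Ik" and fin: "finite Ik" and Q0: "Q 0 = 0"
  shows "Q (Ufun U Ik D z) = (\<Sum>j\<in>Ik. indicator (D j) z *\<^sub>R Q (U j))"
proof (cases "\<exists>j\<in>Ik. z \<in> D j")
  case True
  then obtain j where j: "j \<in> Ik" "z \<in> D j" by blast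
  have other: "k \<in> Ik - {j} \<Longrightarrow> z \<notin> D k" for k
    using dj j unfolding disjoint_family_on_def by blast
  have "Ufun U Ik D z = U j"
    unfolding Ufun_def using j other fin
    by (simp add: sum.remove[OF fin j(1)] indicator_def)
  moreover have "(\<Sum>j\<in>Ik. indicator (D j) z *\<^sub>R Q (U j)) = Q (U j)"
    using j other fin
    by (simp add: sum.remove[OF fin j(1)] indicator_def)
  ultimately show ?thesis by simp
next
  case False
  then have "Ufun U Ik D z = 0" unfolding Ufun_def by (simp add: indicator_def)
  with False Q0 show ?thesis by (simp add: indicator_def)
qed

lemma act_inv:
  assumes g: "group gmul gone ginv" and a: "mp_left_action gmul gone act MC"
  shows "act (ginv h) (act h x) = x" "act h (act (ginv h) x) = x"
proof -
  interpret group gmul gone ginv by fact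
  have h1: "\<forall>x. act gone x = x" and h2: "\<forall>g h x. act (gmul g h) x = act g (act h x)"
    using a by (simp_all add: mp_left_action_def)
  show "act (ginv h) (act h x) = x" using h1 h2 left_inverse by metis
  show "act h (act (ginv h) x) = x" using h1 h2 right_inverse by metis
qed

lemma indicator_act_image:
  assumes g: "group gmul gone ginv" and a: "mp_left_action gmul gone act MC"
  shows "indicator (act h ` S) y = (indicator S (act (ginv h) y) :: real)"
proof -
  have "y \<in> act h ` S \<longleftrightarrow> act (ginv h) y \<in> S"
    using act_inv[OF g a] by (metis image_eqI imageE)
  then show ?thesis by (simp add: indicator_def)
qed

lemma MC_subst:
  fixes f :: "'c::topological_space \<Rightarrow> 'b::{banach, second_countable_topology}"
  assumes a: "mp_left_action gmul gone act MC" and f: "f \<in> borel_measurable MC"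
  shows "integral\<^sup>L MC f = integral\<^sup>L MC (\<lambda>x. f (act c x))"
proof -
  have m: "act c \<in> measurable MC MC" and d: "distr MC MC (act c) = MC"
    using a by (auto simp: mp_left_action_def)
  show ?thesis using integral_distr[OF m f] d by simp
qed

lemma MG_subst:
  fixes f :: "'g::{t2_space,second_countable_topology} \<Rightarrow> 'b::{banach, second_countable_topology}"
  assumes G: "compact_group_haar gmul gone ginv MG" and f: "f \<in> borel_measurable MG"
  shows "integral\<^sup>L MG f = integral\<^sup>L MG (\<lambda>g. f (gmul a (gmul g b)))"
proof -
  have ml: "(\<lambda>h. gmul a h) \<in> measurable MG MG" and dl: "distr MG MG (\<lambda>h. gmul a h) = MG"
   and mr: "(\<lambda>h. gmul h b) \<in> measurable MG MG" and dr: "distr MG MG (\<lambda>h. gmul h b) = MG"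
    using G by (auto simp: compact_group_haar_def)
  have f2: "(\<lambda>g. f (gmul a g)) \<in> borel_measurable MG"
    using measurable_compose[OF ml f] .
  have "integral\<^sup>L MG f = integral\<^sup>L MG (\<lambda>g. f (gmul a g))"
    using integral_distr[OF ml f] dl by simp
  also have "\<dots> = integral\<^sup>L MG (\<lambda>g. f (gmul a (gmul g b)))"
    using integral_distr[OF mr f2] dr by simp
  finally show ?thesis .
qed


lemma cadj_mat1[simp]: "cadj (mat 1 :: complex^'n^'n) = mat 1"
  by (simp add: cadj_def mat_def vec_eq_iff)

lemma conj_map_mat1[simp]: "conj_map (mat 1) (\<tau>::complex^'n^'n) = \<tau>"
  by (simp add: conj_map_def)

lemma cnj_mult_unit: "cmod a = 1 \<Longrightarrow> cnj a * a = 1"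
  by (metis complex_norm_square mult.commute of_real_1 power_one)

theorem theorem3p12:
  fixes gmul :: "'g::{t2_space,second_countable_topology} \<Rightarrow> 'g \<Rightarrow> 'g"
    and gone :: 'g and ginv :: "'g \<Rightarrow> 'g" and MG :: "'g measure"
    and \<rho> :: "'g \<Rightarrow> complex^'n^'n"
    and U :: "'i::finite \<Rightarrow> complex^'n^'n"
    and H :: "'g set" and \<sigma> :: "'i \<Rightarrow> 'g \<Rightarrow> 'i" and \<alpha> :: "'i \<Rightarrow> 'g \<Rightarrow> complex"
    and act :: "'g \<Rightarrow> 'c::{t2_space,second_countable_topology} \<Rightarrow> 'c" and MC :: "'c measure"
    and Ik :: "'i set" and i0 :: 'i and D :: "'i \<Rightarrow> 'c set"
    and i :: 'i and c :: 'g and \<tau> :: "complex^'n^'n"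
  assumes G: "compact_group_haar gmul gone ginv MG"
    and rep: "unitary_rep gmul \<rho>"
    and ueb: "UEB U"
    and Hsub: "finite_subgroup gmul gone ginv H"
    and equiv: "H_equivariant gmul gone \<rho> H U \<sigma> \<alpha>"
    and act: "mp_left_action gmul gone act MC"
    and orbit: "\<exists>j. Ik = (\<lambda>h. \<sigma> j h) ` H"
    and zero: "i0 \<in> Ik"
    and enc: "tight_compatible_encoding ginv act MC H \<sigma> Ik D"
    and i: "i \<in> Ik"
    and c: "c \<in> H" "act c ` D i0 = D i"
  shows
   "(1 / measure MC (D i)) *\<^sub>R
      integral\<^sup>L (MG \<Otimes>\<^sub>M MC)
        (\<lambda>(g, x). indicator (D i) x *\<^sub>R
           conj_map (cadj (\<rho> g) ** Ufun U Ik D (act g x) ** \<rho> g ** cadj (U i)) \<tau>)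
    = (real (card Ik) / measure MC (D i0)) *\<^sub>R
      conj_map (\<rho> c)
        (integral\<^sup>L MG (\<lambda>g.
           (integral\<^sup>L MC (\<lambda>x. indicator (D i0) x * indicator (D i0) (act g x))) *\<^sub>R
           conj_map (cadj (\<rho> g) ** U i0 ** \<rho> g ** cadj (U i0)) (conj_map (cadj (\<rho> c)) \<tau>)))"
proof -
  have grpG: "group gmul gone ginv" using G by (simp add: compact_group_haar_def)
  interpret grp: group gmul gone ginv by (fact grpG)
  have MGp: "prob_space MG" and sMG: "sets MG = sets borel" and cptG: "compact (UNIV::'g set)"
    using G by (auto simp: compact_group_haar_def)
  have MCp: "prob_space MC" and sMC: "sets MC = sets borel"
   and actc: "continuous_on UNIV (\<lambda>(g,x). act g x)"
   and acthom: "\<And>g h x. act (gmul g h) x = act g (act h x)"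
    using act by (auto simp: mp_left_action_def)
  have rhoc: "continuous_on UNIV \<rho>" using rep by (simp add: unitary_rep_def)
  have unit: "\<And>g. \<rho> g ** cadj (\<rho> g) = mat 1" "\<And>g. cadj (\<rho> g) ** \<rho> g = mat 1"
    using rep by (auto simp: unitary_rep_def unitary_mat_def)
  have rhom: "\<And>g h. \<rho> (gmul g h) = \<rho> g ** \<rho> h" using rep by (simp add: unitary_rep_def)
  have Dopen: "\<And>j. j \<in> Ik \<Longrightarrow> open (D j)" and dj: "disjoint_family_on D Ik"
   and Dimg: "\<And>h j. h \<in> H \<Longrightarrow> j \<in> Ik \<Longrightarrow> act h ` D j = D (\<sigma> j (ginv h))"
    using enc by (auto simp: tight_compatible_encoding_def)
  have Hinv: "\<And>a. a \<in> H \<Longrightarrow> ginv a \<in> H" and Hmul: "\<And>a b. a\<in>H \<Longrightarrow> b\<in>H \<Longrightarrow> gmul a b \<in> H"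
    using Hsub by (auto simp: finite_subgroup_def)
  have sig2: "\<And>j h h'. h\<in>H \<Longrightarrow> h'\<in>H \<Longrightarrow> \<sigma> (\<sigma> j h) h' = \<sigma> j (gmul h h')"
   and alph: "\<And>j h. h\<in>H \<Longrightarrow> cmod (\<alpha> j h) = 1"
   and eqv: "\<And>j h. h\<in>H \<Longrightarrow> cadj (\<rho> h) ** U j ** \<rho> h = cscale (\<alpha> j h) (U (\<sigma> j h))"
    using equiv by (auto simp: H_equivariant_def)
  have finIk: "finite Ik" by simp
  obtain j0 where j0: "Ik = (\<lambda>h. \<sigma> j0 h) ` H" using orbit by blast
  obtain h2 where h2: "h2 \<in> H" "i0 = \<sigma> j0 h2" using zero j0 by blast
  have orb_cl: "\<sigma> i0 h \<in> Ik" if h: "h \<in> H" for h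
    using h h2 sig2 Hmul j0 by auto
  have orb_rep: "\<exists>h\<in>H. j = \<sigma> i0 (ginv h)" if j: "j \<in> Ik" for j
  proof -
    obtain h1 where h1: "h1 \<in> H" "j = \<sigma> j0 h1" using j j0 by blast
    have e: "gmul h2 (gmul (ginv h2) h1) = h1" by (simp add: grp.assoc[symmetric])
    have "\<sigma> i0 (gmul (ginv h2) h1) = \<sigma> j0 (gmul h2 (gmul (ginv h2) h1))"
      using h1 h2 sig2 Hinv Hmul by simp
    then have "j = \<sigma> i0 (ginv (ginv (gmul (ginv h2) h1)))" using h1 e by simp
    then show ?thesis using Hinv Hmul h1 h2 by blast
  qed
  have spMC: "space MC = UNIV" using sets_eq_imp_space_eq[OF sMC] by simp
  have spMG: "space MG = UNIV" using sets_eq_imp_space_eq[OF sMG] by simp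
  have Dsets: "D j \<in> sets MC" if "j \<in> Ik" for j using Dopen[OF that] sMC by auto
  have injc: "inj (act c)" using act_inv[OF grpG act] by (metis injI)
  have measD: "measure MC (D i) = measure MC (D i0)"
  proof -
    have m: "act c \<in> measurable MC MC" and d: "distr MC MC (act c) = MC"
      using act by (auto simp: mp_left_action_def)
    have v: "act c -` D i = D i0" using c(2) injc by (metis inj_vimage_image_eq)
    have "measure MC (D i) = measure (distr MC MC (act c)) (D i)" using d by simp
    also have "\<dots> = measure MC (D i0)" using measure_distr[OF m Dsets[OF i]] v spMC by simp
    finally show ?thesis .
  qed
  show ?thesis
  proof (cases "measure MC (D i) = 0")
    case True
    then show ?thesis using measD by simp
  next
    case False
    then have Dne: "D i \<noteq> {}" by auto
    have Ueq: "U (\<sigma> i0 (ginv h)) = cscale (cnj (\<alpha> i0 (ginv h))) (\<rho> h ** U i0 ** cadj (\<rho> h))"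
      if h: "h \<in> H" for h
    proof -
      have "cadj (\<rho> (ginv h)) ** U i0 ** \<rho> (ginv h) = cscale (\<alpha> i0 (ginv h)) (U (\<sigma> i0 (ginv h)))"
        using eqv Hinv h by blast
      moreover have "cadj (\<rho> (ginv h)) = \<rho> h" "\<rho> (ginv h) = cadj (\<rho> h)"
        using rep_inv[OF grpG rep, of "ginv h"] rep_inv[OF grpG rep, of h] by simp_all
      ultimately have "\<rho> h ** U i0 ** cadj (\<rho> h) = cscale (\<alpha> i0 (ginv h)) (U (\<sigma> i0 (ginv h)))"
        by simp
      then show ?thesis
        using cnj_mult_unit[OF alph[OF Hinv[OF h]]] by (simp add: cscale_cscale)
    qed
    have ic: "i = \<sigma> i0 (ginv c)"
    proof (rule ccontr)
      assume ne: "i \<noteq> \<sigma> i0 (ginv c)"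
      have "D (\<sigma> i0 (ginv c)) = D i" using Dimg[OF c(1) zero] c(2) by simp
      moreover have "D i \<inter> D (\<sigma> i0 (ginv c)) = {}"
        using dj ne i orb_cl[OF Hinv[OF c(1)]] unfolding disjoint_family_on_def by blast
      ultimately show False using Dne by simp
    qed
    have Ui: "U i = cscale (cnj (\<alpha> i0 (ginv c))) (\<rho> c ** U i0 ** cadj (\<rho> c))"
      using Ueq[OF c(1)] ic by simp
    define P where "P g = (\<integral>x. indicator (D i0) x * indicator (D i0) (act g x) \<partial>MC :: real)" for g
    define N where "N g = conj_map (\<rho> c ** cadj (\<rho> g) ** U i0 ** \<rho> g ** cadj (U i0) ** cadj (\<rho> c)) \<tau>" for g
    define M where "M j g = conj_map (cadj (\<rho> g) ** U j ** \<rho> g ** cadj (U i)) \<tau>" for j g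
    define F where "F j = (\<lambda>(g,x). (indicator (D i) x * indicator (D j) (act g x) :: real) *\<^sub>R M j g)" for j
    interpret MGP: prob_space MG by (fact MGp)
    interpret MCP: prob_space MC by (fact MCp)
    interpret PP: prob_space "MG \<Otimes>\<^sub>M MC" by (rule prob_space_pair[OF MGp MCp])
    interpret PSF: pair_sigma_finite MG MC
      by (simp add: pair_sigma_finite_def prob_space_imp_sigma_finite MGp MCp)
    have sprod: "sets (MG \<Otimes>\<^sub>M MC) = sets (borel :: ('g \<times> 'c) measure)"
      unfolding sets_pair_measure_cong[OF sMG sMC] borel_prod ..
    have Ssets: "{p. snd p \<in> A \<and> act (fst p) (snd p) \<in> B} \<in> sets (MG \<Otimes>\<^sub>M MC)"
      if "open A" "open B" for A B
    proof -
      have "{p::'g\<times>'c. snd p \<in> A \<and> act (fst p) (snd p) \<in> B} = snd -` A \<inter> (\<lambda>(g,x). act g x) -` B"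
        by auto
      moreover have "open (snd -` A)" using open_vimage_snd that by blast
      moreover have "open ((\<lambda>(g,x). act g x) -` B)" using open_vimage[OF that(2) actc] .
      ultimately have "open {p::'g\<times>'c. snd p \<in> A \<and> act (fst p) (snd p) \<in> B}" by auto
      then show ?thesis using sprod by auto
    qed
    have actgc: "continuous_on UNIV (act g)" for g
    proof -
      have "continuous_on UNIV (\<lambda>x. (g::'g, x::'c))" by (intro continuous_intros)
      then have "continuous_on UNIV ((\<lambda>(g,x). act g x) \<circ> (\<lambda>x. (g,x)))"
        by (rule continuous_on_compose) (rule continuous_on_subset[OF actc], simp)
      then show ?thesis by (simp add: o_def)
    qed
    have Rmeas: "(\<lambda>x. indicator A x * indicator B (act g x) :: real) \<in> borel_measurable MC"
      if "open A" "open B" for A B g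
    proof -
      have "(\<lambda>x. indicator A x * indicator B (act g x) :: real) = indicator (A \<inter> act g -` B)"
        by (auto simp: indicator_def fun_eq_iff)
      moreover have "open (A \<inter> act g -` B)" using that(1) open_vimage[OF that(2) actgc] by (rule open_Int)
      then have "A \<inter> act g -` B \<in> sets MC" by (simp add: sMC borel_open)
      ultimately show ?thesis by simp
    qed
    have Rint: "integrable MC (\<lambda>x. indicator A x * indicator B (act g x) :: real)"
      if "open A" "open B" for A B g
      by (rule MCP.integrable_const_bound[where B=1]) (simp_all add: Rmeas[OF that], simp add: indicator_def)
    have Mcont: "continuous_on UNIV (M j)" for j unfolding M_def
      by (intro continuous_on_conj_map continuous_on_mm continuous_on_cadj continuous_on_const rhoc)
    have Mmeas: "M j \<in> borel_measurable MG" for j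
      using borel_measurable_continuous_onI[OF Mcont] measurable_cong_sets[OF sMG refl] by blast
    have Ncont: "continuous_on UNIV N" unfolding N_def
      by (intro continuous_on_conj_map continuous_on_mm continuous_on_cadj continuous_on_const rhoc)
    have Nmeas: "N \<in> borel_measurable MG"
      using borel_measurable_continuous_onI[OF Ncont] measurable_cong_sets[OF sMG refl] by blast
    have Pmeas: "P \<in> borel_measurable MG"
    proof -
      have "case_prod (\<lambda>g x. indicator (D i0) x * indicator (D i0) (act g x) :: real) =
            indicator {p. snd p \<in> D i0 \<and> act (fst p) (snd p) \<in> D i0}"
        by (auto simp: indicator_def fun_eq_iff)
      then have "case_prod (\<lambda>g x. indicator (D i0) x * indicator (D i0) (act g x) :: real)
          \<in> borel_measurable (MG \<Otimes>\<^sub>M MC)"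
        using Ssets[OF Dopen[OF zero] Dopen[OF zero]] by simp
      then show ?thesis unfolding P_def by (rule MCP.borel_measurable_lebesgue_integral)
    qed
    have PNmeas: "(\<lambda>g. P g *\<^sub>R N g) \<in> borel_measurable MG" using Pmeas Nmeas by simp
    have Fmeas: "F j \<in> borel_measurable (MG \<Otimes>\<^sub>M MC)" if "j \<in> Ik" for j
    proof -
      have "F j = (\<lambda>p. indicator {p. snd p \<in> D i \<and> act (fst p) (snd p) \<in> D j} p *\<^sub>R M j (fst p))"
        unfolding F_def by (auto simp: indicator_def fun_eq_iff)
      moreover have "(\<lambda>p. indicator {p. snd p \<in> D i \<and> act (fst p) (snd p) \<in> D j} p *\<^sub>R M j (fst p))
          \<in> borel_measurable (MG \<Otimes>\<^sub>M MC)"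
        by (intro borel_measurable_scaleR borel_measurable_indicator Ssets Dopen i that
            measurable_compose[OF measurable_fst Mmeas])
      ultimately show ?thesis by simp
    qed
    have Fint: "integrable (MG \<Otimes>\<^sub>M MC) (F j)" if "j \<in> Ik" for j
    proof -
      have "compact (range (M j))" using compact_continuous_image[OF Mcont cptG] by simp
      then obtain B where B: "\<And>g. norm (M j g) \<le> B"
        using compact_imp_bounded bounded_iff by (metis rangeI)
      show ?thesis
      proof (rule PP.integrable_const_bound[where B=B])
        show "F j \<in> borel_measurable (MG \<Otimes>\<^sub>M MC)" by (rule Fmeas[OF that])
        show "AE p in MG \<Otimes>\<^sub>M MC. norm (F j p) \<le> B"
        proof (rule AE_I2)
          fix p :: "'g \<times> 'c"
          obtain g x where p: "p = (g, x)" by (cases p)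
          show "norm (F j p) \<le> B" using B[of g] B[of g] norm_ge_zero[of "M j g"]
            unfolding p F_def by (simp add: indicator_def) (meson norm_ge_zero order_trans)
        qed
      qed
    qed
    have Fj: "integral\<^sup>L (MG \<Otimes>\<^sub>M MC) (F j) = (\<integral>g. P g *\<^sub>R N g \<partial>MG)" if j: "j \<in> Ik" for j
    proof -
      obtain h where h: "h \<in> H" "j = \<sigma> i0 (ginv h)" using orb_rep[OF j] by blast
      have Dj: "D j = act h ` D i0" using Dimg[OF h(1) zero] h(2) by simp
      have Uj: "U j = cscale (cnj (\<alpha> i0 (ginv h))) (\<rho> h ** U i0 ** cadj (\<rho> h))"
        using Ueq[OF h(1)] h(2) by simp
      define T where "T g = gmul (ginv h) (gmul g c)" for g
      have rinv: "\<rho> (ginv x) = cadj (\<rho> x)" for x using rep_inv[OF grpG rep] by simp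
      have MN: "M j g = N (T g)" for g
      proof -
        have rT: "\<rho> (T g) = cadj (\<rho> h) ** \<rho> g ** \<rho> c"
          unfolding T_def by (simp add: rhom rinv matrix_mul_assoc)
        show ?thesis unfolding M_def N_def rT Uj Ui
          by (simp add: cadj_mult cadj_cscale cscale_mult_left cscale_mult_right cscale_cscale
              matrix_mul_assoc unit conj_map_cscale norm_mult alph Hinv h(1) c(1))
      qed
      have PT: "(\<integral>x. indicator (D i) x * indicator (D j) (act g x) \<partial>MC) = P (T g)" for g
      proof -
        have "(\<integral>x. indicator (D i) x * indicator (D j) (act g x) \<partial>MC)
            = (\<integral>x. indicator (D i) (act c x) * indicator (D j) (act g (act c x)) \<partial>MC :: real)"
          by (rule MC_subst[OF act Rmeas[OF Dopen[OF i] Dopen[OF j]]])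
        also have "\<dots> = P (T g)" unfolding P_def
        proof (rule Bochner_Integration.integral_cong[OF refl])
          fix x
          have "indicator (D i) (act c x) = (indicator (D i0) x :: real)"
            unfolding c(2)[symmetric] indicator_act_image[OF grpG act] act_inv[OF grpG act] ..
          moreover have "indicator (D j) (act g (act c x)) = (indicator (D i0) (act (T g) x) :: real)"
            unfolding Dj indicator_act_image[OF grpG act] T_def acthom ..
          ultimately show "indicator (D i) (act c x) * indicator (D j) (act g (act c x))
              = (indicator (D i0) x * indicator (D i0) (act (T g) x) :: real)" by simp
        qed
        finally show ?thesis .
      qed
      have inner: "(\<integral>x. F j (g,x) \<partial>MC) = P (T g) *\<^sub>R M j g" for g
      proof -
        have "(\<integral>x. F j (g,x) \<partial>MC) = (\<integral>x. (indicator (D i) x * indicator (D j) (act g x)) *\<^sub>R M j g \<partial>MC)"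
          unfolding F_def by simp
        also have "\<dots> = (\<integral>x. indicator (D i) x * indicator (D j) (act g x) \<partial>MC) *\<^sub>R M j g"
          by (simp add: Rint[OF Dopen[OF i] Dopen[OF j]])
        finally show ?thesis using PT by simp
      qed
      have "integral\<^sup>L (MG \<Otimes>\<^sub>M MC) (F j) = (\<integral>g. (\<integral>x. F j (g,x) \<partial>MC) \<partial>MG)"
        using PSF.integral_fst[of "\<lambda>g x. F j (g,x)"] Fint[OF j] by simp
      also have "\<dots> = (\<integral>g. P (T g) *\<^sub>R N (T g) \<partial>MG)" by (simp add: inner MN)
      also have "\<dots> = (\<integral>g. P g *\<^sub>R N g \<partial>MG)"
        unfolding T_def by (rule MG_subst[OF G PNmeas, of "ginv h" c, symmetric])
      finally show ?thesis .
    qed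
    have decomp: "(\<lambda>(g, x). indicator (D i) x *\<^sub>R
           conj_map (cadj (\<rho> g) ** Ufun U Ik D (act g x) ** \<rho> g ** cadj (U i)) \<tau>) = (\<lambda>p. \<Sum>j\<in>Ik. F j p)"
    proof (rule ext, clarify)
      fix g x
      have "conj_map (cadj (\<rho> g) ** Ufun U Ik D (act g x) ** \<rho> g ** cadj (U i)) \<tau>
          = (\<Sum>j\<in>Ik. indicator (D j) (act g x) *\<^sub>R conj_map (cadj (\<rho> g) ** U j ** \<rho> g ** cadj (U i)) \<tau>)"
        by (rule Ufun_decomp[OF dj finIk, where Q="\<lambda>W. conj_map (cadj (\<rho> g) ** W ** \<rho> g ** cadj (U i)) \<tau>"]) simp
      then show "indicator (D i) x *\<^sub>R conj_map (cadj (\<rho> g) ** Ufun U Ik D (act g x) ** \<rho> g ** cadj (U i)) \<tau>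
          = (\<Sum>j\<in>Ik. F j (g, x))"
        by (simp only: F_def M_def scaleR_sum_right scaleR_scaleR case_prod_conv)
    qed
    have LHSint: "integral\<^sup>L (MG \<Otimes>\<^sub>M MC) (\<lambda>(g, x). indicator (D i) x *\<^sub>R
           conj_map (cadj (\<rho> g) ** Ufun U Ik D (act g x) ** \<rho> g ** cadj (U i)) \<tau>)
         = real (card Ik) *\<^sub>R (\<integral>g. P g *\<^sub>R N g \<partial>MG)"
    proof -
      have "integral\<^sup>L (MG \<Otimes>\<^sub>M MC) (\<lambda>p. \<Sum>j\<in>Ik. F j p) = (\<Sum>j\<in>Ik. integral\<^sup>L (MG \<Otimes>\<^sub>M MC) (F j))"
        using Fint by (rule Bochner_Integration.integral_sum)
      also have "\<dots> = (\<Sum>j\<in>Ik. (\<integral>g. P g *\<^sub>R N g \<partial>MG))" by (rule sum.cong[OF refl]) (rule Fj)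
      also have "\<dots> = real (card Ik) *\<^sub>R (\<integral>g. P g *\<^sub>R N g \<partial>MG)" by (rule sum_constant_scaleR)
      finally show ?thesis unfolding decomp .
    qed
    have RHSint: "conj_map (\<rho> c) (\<integral>g. P g *\<^sub>R conj_map (cadj (\<rho> g) ** U i0 ** \<rho> g ** cadj (U i0))
          (conj_map (cadj (\<rho> c)) \<tau>) \<partial>MG) = (\<integral>g. P g *\<^sub>R N g \<partial>MG)"
    proof -
      have "conj_map (\<rho> c) (\<integral>g. P g *\<^sub>R conj_map (cadj (\<rho> g) ** U i0 ** \<rho> g ** cadj (U i0))
          (conj_map (cadj (\<rho> c)) \<tau>) \<partial>MG) = (\<integral>g. conj_map (\<rho> c) (P g *\<^sub>R conj_map (cadj (\<rho> g) ** U i0 ** \<rho> g ** cadj (U i0))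
          (conj_map (cadj (\<rho> c)) \<tau>)) \<partial>MG)"
        by (rule integral_bounded_linear'[OF bounded_linear_conj_map bounded_linear_conj_map[of "cadj (\<rho> c)"], symmetric])
          (simp add: conj_map_comp unit)
      also have "\<dots> = (\<integral>g. P g *\<^sub>R N g \<partial>MG)"
        by (simp add: linear_cmul[OF linear_conj_map] conj_map_comp N_def matrix_mul_assoc)
      finally show ?thesis .
    qed
    have e: "conj_map (\<rho> c)
        (integral\<^sup>L MG (\<lambda>g.
           (integral\<^sup>L MC (\<lambda>x. indicator (D i0) x * indicator (D i0) (act g x))) *\<^sub>R
           conj_map (cadj (\<rho> g) ** U i0 ** \<rho> g ** cadj (U i0)) (conj_map (cadj (\<rho> c)) \<tau>)))
       = (\<integral>g. P g *\<^sub>R N g \<partial>MG)"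
      using RHSint unfolding P_def .
    show ?thesis unfolding LHSint e using measD by simp
  qed
qed

end
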